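(* For all real numbers $\alpha\ge 0$ and $\beta\ge 0$ with $\alpha\neq\beta$, there exist two SISO deterministic programs $C_1$ and $C_2$, both with uniformly distributed secret input, and a constant $D>0$ such that for every $N>D$, $$IL_\alpha(C_1,N) > IL_\alpha(C_2,N)\quad\text{and}\quad IL_\beta(C_1,N) < IL_\beta(C_2,N).$$
   Context: A SISO deterministic program $C$ is a family indexed by $N\in\mathbb{N}^+$: for each $N$, a random variable $A$ uniformly distributed on $\mathcal{A}_N=\{0,1,\dots,N-1\}$, and a surjective map $F_N$ from $\mathcal{A}_N$ onto a finite set $\mathcal{O}_N$. The output is $O=F_N(A)$, and $\mathbf{p}_N$ denotes the distribution vector of $O$, so $\mathbf{p}_N(o)=|F_N^{-1}(o)|/N$. Two programs $C_1,C_2$ are compared at the same value of $N$. For a probability vector $\mathbf{p}=(p_1,\dots,p_n)$ and $\alpha\in[0,\infty]$, the Rényi entropy is $H_\alpha(\mathbf{p})=\frac{1}{1-\alpha}\log\sum_i p_i^\alpha$ for $\alpha\notin\{1,\infty\}$, with the convention $0^0=0$, so that $H_0(\mathbf{p})$ is the log of the number of nonzero entries. The limiting cases are $H_1(\mathbf{p})=-\sum_i p_i\log p_i$ (Shannon entropy) and $H_\infty(\mathbf{p})=-\log\max_i p_i$ (min-entropy). The $\alpha$-information leakage of $C$ at $N$ is $IL_\alpha(C,N)=H_\alpha(\mathbf{p}_N)$. *)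

theory Defs
  imports "HOL-Analysis.Analysis"
begin

text \<open>Convention 0^0 = 0: only nonzero entries
  contribute.\<close>
definition renyi_entropy :: "real \<Rightarrow> 'a set \<Rightarrow> ('a \<Rightarrow> real) \<Rightarrow> real" where
  "renyi_entropy \<alpha> S p =
     (if \<alpha> = 1 then - (\<Sum>i\<in>{i\<in>S. p i \<noteq> 0}. p i * ln (p i))
      else (1 / (1 - \<alpha>)) * ln (\<Sum>i\<in>{i\<in>S. p i \<noteq> 0}. p i powr \<alpha>))"

text \<open>A SISO deterministic program: for each N, a map F N from A_N = {0..<N} to outputs.
  The output set O_N is the image F N ` {0..<N}, so F N is surjective onto O_N.\<close>
type_synonym siso_program = "nat \<Rightarrow> nat \<Rightarrow> nat"

definition out_set :: "siso_program \<Rightarrow> nat \<Rightarrow> nat set" where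
  "out_set C N = C N ` {0..<N}"

definition out_dist :: "siso_program \<Rightarrow> nat \<Rightarrow> nat \<Rightarrow> real" where
  "out_dist C N y = real (card {a\<in>{0..<N}. C N a = y}) / real N"

definition info_leak :: "real \<Rightarrow> siso_program \<Rightarrow> nat \<Rightarrow> real" where
  "info_leak \<alpha> C N = renyi_entropy \<alpha> (out_set C N) (out_dist C N)"

end

theory Submission
  imports Defs
begin


lemma blk_iff:
  assumes "j < k" "(0::nat) < m" "k*m \<le> N"
  shows "(a < N \<and> (if a < k*m then a div m else a) = j) \<longleftrightarrow> (j*m \<le> a \<and> a < j*m+m)"
proof
  assume h: "a < N \<and> (if a < k*m then a div m else a) = j"
  have "a < k*m"
  proof (rule ccontr)
    assume "\<not> a < k*m"
    then have "a = j" using h by auto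
    moreover have "k \<le> k*m" using assms(2) by simp
    ultimately show False using \<open>\<not> a < k*m\<close> assms(1) by linarith
  qed
  then have "a div m = j" using h by auto
  then show "j*m \<le> a \<and> a < j*m+m" using assms(2)
    by (metis add.commute div_mult_mod_eq le_add2 mod_less_divisor mult.commute nat_add_left_cancel_less)
next
  assume h: "j*m \<le> a \<and> a < j*m+m"
  have "j*m+m \<le> k*m" using assms(1) by (metis Suc_leI add.commute mult_Suc mult_le_mono1)
  then have "a < k*m" using h by linarith
  moreover have "a div m = j" using h assms(2)
    by (metis add.commute div_nat_eqI mult.commute mult_Suc)
  ultimately show "a < N \<and> (if a < k*m then a div m else a) = j" using assms(3) by auto
qed

definition prog1 :: "nat \<Rightarrow> siso_program" where
  "prog1 B = (\<lambda>N a. if a < B then 0 else a)"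
definition prog2 :: "nat \<Rightarrow> nat \<Rightarrow> siso_program" where
  "prog2 k m = (\<lambda>N a. if a < k*m then a div m else a)"

lemma out_dist_pos:
  assumes "y \<in> out_set C N"
  shows "out_dist C N y > 0"
proof -
  obtain a where a: "a < N" "C N a = y" using assms unfolding out_set_def by auto
  have "a \<in> {a\<in>{0..<N}. C N a = y}" using a by auto
  then have "card {a\<in>{0..<N}. C N a = y} > 0" by (subst card_gt_0_iff) auto
  moreover have "N > 0" using a by simp
  ultimately show ?thesis unfolding out_dist_def by simp
qed

lemma info_leak_eq:
  "info_leak \<gamma> C N = (if \<gamma> = 1 then - (\<Sum>y\<in>out_set C N. out_dist C N y * ln (out_dist C N y))
     else 1/(1-\<gamma>) * ln (\<Sum>y\<in>out_set C N. out_dist C N y powr \<gamma>))"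
proof -
  have "{i\<in>out_set C N. out_dist C N i \<noteq> 0} = out_set C N" using out_dist_pos by fastforce
  then show ?thesis unfolding info_leak_def renyi_entropy_def by simp
qed

lemma sum_prog1:
  assumes "1 \<le> B" "B \<le> N"
  shows "(\<Sum>y\<in>out_set (prog1 B) N. f (out_dist (prog1 B) N y)) = f (real B / real N) + real (N - B) * f (1 / real N)"
proof -
  have os: "out_set (prog1 B) N = insert 0 {B..<N}"
  proof
    show "out_set (prog1 B) N \<subseteq> insert 0 {B..<N}" unfolding out_set_def prog1_def by auto
    have e0: "prog1 B N 0 = 0" unfolding prog1_def by simp
    have "(0::nat) \<in> {0..<N}" using assms by simp
    then have "0 \<in> out_set (prog1 B) N" unfolding out_set_def using e0 by (metis image_eqI)
    moreover have "{B..<N} \<subseteq> out_set (prog1 B) N"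
    proof
      fix y assume y: "y \<in> {B..<N}"
      then have "prog1 B N y = y" unfolding prog1_def by simp
      moreover have "y \<in> {0..<N}" using y by simp
      ultimately show "y \<in> out_set (prog1 B) N" unfolding out_set_def by (metis image_eqI)
    qed
    ultimately show "insert 0 {B..<N} \<subseteq> out_set (prog1 B) N" by blast
  qed
  have d0: "out_dist (prog1 B) N 0 = real B / real N"
  proof -
    have "{a\<in>{0..<N}. prog1 B N a = 0} = {0..<B}" unfolding prog1_def using assms by auto
    then show ?thesis unfolding out_dist_def by simp
  qed
  have d1: "out_dist (prog1 B) N y = 1 / real N" if "y \<in> {B..<N}" for y
  proof -
    have "{a\<in>{0..<N}. prog1 B N a = y} = {y}" unfolding prog1_def using assms that by auto
    then show ?thesis unfolding out_dist_def by simp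
  qed
  have "0 \<notin> {B..<N}" using assms by auto
  then show ?thesis unfolding os using d0 d1 by simp
qed

lemma sum_prog2:
  assumes "1 \<le> k" "1 \<le> m" "k*m \<le> N"
  shows "(\<Sum>y\<in>out_set (prog2 k m) N. f (out_dist (prog2 k m) N y)) = real k * f (real m / real N) + real (N - k*m) * f (1 / real N)"
proof -
  have km: "k \<le> k*m" using assms by simp
  have os: "out_set (prog2 k m) N = {0..<k} \<union> {k*m..<N}"
  proof
    show "out_set (prog2 k m) N \<subseteq> {0..<k} \<union> {k*m..<N}"
    proof
      fix y assume "y \<in> out_set (prog2 k m) N"
      then obtain a where a: "a < N" "y = prog2 k m N a" unfolding out_set_def by auto
      show "y \<in> {0..<k} \<union> {k*m..<N}"
      proof (cases "a < k*m")
        case True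
        then have "y = a div m" using a unfolding prog2_def by simp
        moreover have "a div m < k" using True by (intro less_mult_imp_div_less)
        ultimately have "y \<in> {0..<k}" by simp
        then show ?thesis by (rule UnI1)
      next
        case False
        then have "y = a" using a unfolding prog2_def by simp
        then have "y \<in> {k*m..<N}" using False a by simp
        then show ?thesis by (rule UnI2)
      qed
    qed
    show "{0..<k} \<union> {k*m..<N} \<subseteq> out_set (prog2 k m) N"
    proof
      fix y assume y: "y \<in> {0..<k} \<union> {k*m..<N}"
      show "y \<in> out_set (prog2 k m) N"
      proof (cases "y < k")
        case True
        have "y*m < k*m" using True assms by simp
        then have "y*m < N" using assms by linarith
        moreover have "prog2 k m N (y*m) = y" unfolding prog2_def using \<open>y*m < k*m\<close> assms by simp
        ultimately have "y*m \<in> {0..<N}" "y = prog2 k m N (y*m)" by simp_all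
        then show ?thesis unfolding out_set_def by (rule image_eqI[rotated])
      next
        case False
        then have "y \<in> {k*m..<N}" using y by auto
        then have "y \<in> {0..<N}" "y = prog2 k m N y" unfolding prog2_def by simp_all
        then show ?thesis unfolding out_set_def by (rule image_eqI[rotated])
      qed
    qed
  qed
  have d0: "out_dist (prog2 k m) N j = real m / real N" if "j \<in> {0..<k}" for j
  proof -
    have "{a\<in>{0..<N}. prog2 k m N a = j} = {j*m..<j*m+m}"
    proof (rule set_eqI)
      fix a
      have "j < k" using that by simp
      have "0 < m" using assms by simp
      show "a \<in> {a\<in>{0..<N}. prog2 k m N a = j} \<longleftrightarrow> a \<in> {j*m..<j*m+m}"
        using blk_iff[OF \<open>j < k\<close> \<open>0 < m\<close> assms(3), of a] unfolding prog2_def by simp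
    qed
    then show ?thesis unfolding out_dist_def by simp
  qed
  have d1: "out_dist (prog2 k m) N y = 1 / real N" if "y \<in> {k*m..<N}" for y
  proof -
    have "{a\<in>{0..<N}. prog2 k m N a = y} = {y}" unfolding prog2_def
    proof (intro set_eqI iffI)
      fix a assume a: "a \<in> {a\<in>{0..<N}. (if a < k*m then a div m else a) = y}"
      have "\<not> a < k*m"
      proof
        assume "a < k*m"
        then have "a div m = y" using a by simp
        moreover have "a div m \<le> a" by simp
        ultimately show False using \<open>a < k*m\<close> that by simp
      qed
      then show "a \<in> {y}" using a by simp
    next
      fix a assume "a \<in> {y}" then show "a \<in> {a\<in>{0..<N}. (if a < k*m then a div m else a) = y}" using that by simp
    qed
    then show ?thesis unfolding out_dist_def by simp
  qed
  have "{0..<k} \<inter> {k*m..<N} = {}" using km by auto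
  then have "(\<Sum>y\<in>{0..<k} \<union> {k*m..<N}. f (out_dist (prog2 k m) N y)) =
     (\<Sum>y\<in>{0..<k}. f (out_dist (prog2 k m) N y)) + (\<Sum>y\<in>{k*m..<N}. f (out_dist (prog2 k m) N y))"
    by (simp add: sum.union_disjoint)
  also have "\<dots> = real k * f (real m / real N) + real (N - k*m) * f (1 / real N)"
    using d0 d1 by simp
  finally show ?thesis unfolding os .
qed

definition G :: "nat \<Rightarrow> nat \<Rightarrow> nat \<Rightarrow> real \<Rightarrow> real" where
  "G B k m \<gamma> = real B powr \<gamma> + (real k * real m - real B) - real k * real m powr \<gamma>"

definition good :: "nat \<Rightarrow> nat \<Rightarrow> nat \<Rightarrow> real \<Rightarrow> bool" where
  "good B k m \<gamma> = (if \<gamma> = 1 then real B * ln (real B) < real k * real m * ln (real m)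
     else if \<gamma> < 1 then G B k m \<gamma> > 0 else G B k m \<gamma> < 0)"

definition bad :: "nat \<Rightarrow> nat \<Rightarrow> nat \<Rightarrow> real \<Rightarrow> bool" where
  "bad B k m \<gamma> = (if \<gamma> = 1 then real B * ln (real B) > real k * real m * ln (real m)
     else if \<gamma> < 1 then G B k m \<gamma> < 0 else G B k m \<gamma> > 0)"

lemma aux_id1: "(n::real) > 0 \<Longrightarrow> (b/n)*(x - l) + (n - b)*((1/n)*(-l)) = b*x/n - l"
  by (simp add: field_simps)
lemma aux_id2: "(n::real) > 0 \<Longrightarrow> k*((m/n)*(x - l)) + (n - k*m)*((1/n)*(-l)) = k*m*x/n - l"
  by (simp add: field_simps)

lemma S_formulas:
  assumes "1 \<le> B" "B \<le> k*m" "1 \<le> k" "1 \<le> m" "k*m \<le> N"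
  shows "(\<Sum>y\<in>out_set (prog1 B) N. out_dist (prog1 B) N y powr \<gamma>) = (real B powr \<gamma> + (real N - real B)) / real N powr \<gamma>"
    and "(\<Sum>y\<in>out_set (prog2 k m) N. out_dist (prog2 k m) N y powr \<gamma>) = (real k * real m powr \<gamma> + (real N - real k * real m)) / real N powr \<gamma>"
    and "(\<Sum>y\<in>out_set (prog1 B) N. out_dist (prog1 B) N y * ln (out_dist (prog1 B) N y)) = (real B * ln (real B)) / real N - ln (real N)"
    and "(\<Sum>y\<in>out_set (prog2 k m) N. out_dist (prog2 k m) N y * ln (out_dist (prog2 k m) N y)) = (real k * real m * ln (real m)) / real N - ln (real N)"
proof -
  have BN: "B \<le> N" using assms by linarith
  have Npos: "real N > 0" using assms(1) BN by simp
  have Bpos: "real B > 0" using assms by simp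
  have mpos: "real m > 0" using assms by simp
  have Np: "real N powr \<gamma> > 0" using Npos by simp
  have rNB: "real (N - B) = real N - real B" using BN by simp
  have rNkm: "real (N - k*m) = real N - real k * real m" using assms(5) by simp
  have p1: "(x / real N) powr \<gamma> = x powr \<gamma> / real N powr \<gamma>" if "x \<ge> 0" for x
    using that Npos by (simp add: powr_divide)
  have p2: "(1 / real N) powr \<gamma> = 1 / real N powr \<gamma>" using p1[of 1] by simp
  show "(\<Sum>y\<in>out_set (prog1 B) N. out_dist (prog1 B) N y powr \<gamma>) = (real B powr \<gamma> + (real N - real B)) / real N powr \<gamma>"
  proof -
    have "(\<Sum>y\<in>out_set (prog1 B) N. out_dist (prog1 B) N y powr \<gamma>) = (real B / real N) powr \<gamma> + real (N - B) * (1 / real N) powr \<gamma>"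
      by (rule sum_prog1[OF assms(1) BN])
    also have "\<dots> = real B powr \<gamma> / real N powr \<gamma> + (real N - real B) / real N powr \<gamma>"
      by (simp only: p1 p2 rNB of_nat_0_le_iff) simp
    also have "\<dots> = (real B powr \<gamma> + (real N - real B)) / real N powr \<gamma>" by (simp add: add_divide_distrib)
    finally show ?thesis .
  qed
  show "(\<Sum>y\<in>out_set (prog2 k m) N. out_dist (prog2 k m) N y powr \<gamma>) = (real k * real m powr \<gamma> + (real N - real k * real m)) / real N powr \<gamma>"
  proof -
    have "(\<Sum>y\<in>out_set (prog2 k m) N. out_dist (prog2 k m) N y powr \<gamma>) = real k * (real m / real N) powr \<gamma> + real (N - k*m) * (1 / real N) powr \<gamma>"
      by (rule sum_prog2[OF assms(3,4,5)])
    also have "\<dots> = real k * (real m powr \<gamma> / real N powr \<gamma>) + (real N - real k * real m) / real N powr \<gamma>"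
      by (simp only: p1 p2 rNkm of_nat_0_le_iff) simp
    also have "\<dots> = (real k * real m powr \<gamma> + (real N - real k * real m)) / real N powr \<gamma>" by (simp add: add_divide_distrib)
    finally show ?thesis .
  qed
  have l1: "ln (x / real N) = ln x - ln (real N)" if "x > 0" for x using that Npos by (simp add: ln_div)
  have l2: "ln (1 / real N) = - ln (real N)" using Npos by (simp add: ln_div)
  show "(\<Sum>y\<in>out_set (prog1 B) N. out_dist (prog1 B) N y * ln (out_dist (prog1 B) N y)) = (real B * ln (real B)) / real N - ln (real N)"
  proof -
    have "(\<Sum>y\<in>out_set (prog1 B) N. out_dist (prog1 B) N y * ln (out_dist (prog1 B) N y)) = (real B / real N) * ln (real B / real N) + real (N - B) * ((1 / real N) * ln (1 / real N))"
      by (rule sum_prog1[OF assms(1) BN])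
    also have "\<dots> = (real B / real N) * (ln (real B) - ln (real N)) + (real N - real B) * ((1 / real N) * (- ln (real N)))"
      by (simp only: l1[OF Bpos] l2 rNB)
    also have "\<dots> = (real B * ln (real B)) / real N - ln (real N)" by (rule aux_id1[OF Npos])
    finally show ?thesis .
  qed
  show "(\<Sum>y\<in>out_set (prog2 k m) N. out_dist (prog2 k m) N y * ln (out_dist (prog2 k m) N y)) = (real k * real m * ln (real m)) / real N - ln (real N)"
  proof -
    have "(\<Sum>y\<in>out_set (prog2 k m) N. out_dist (prog2 k m) N y * ln (out_dist (prog2 k m) N y)) = real k * ((real m / real N) * ln (real m / real N)) + real (N - k*m) * ((1 / real N) * ln (1 / real N))"
      by (rule sum_prog2[OF assms(3,4,5)])
    also have "\<dots> = real k * ((real m / real N) * (ln (real m) - ln (real N))) + (real N - real k * real m) * ((1 / real N) * (- ln (real N)))"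
      by (simp only: l1[OF mpos] l2 rNkm)
    also have "\<dots> = (real k * real m * ln (real m)) / real N - ln (real N)" by (rule aux_id2[OF Npos])
    finally show ?thesis .
  qed
qed

lemma compare:
  assumes "1 \<le> B" "B \<le> k*m" "1 \<le> k" "1 \<le> m" "k*m \<le> N"
  shows "good B k m \<gamma> \<Longrightarrow> info_leak \<gamma> (prog1 B) N > info_leak \<gamma> (prog2 k m) N"
    and "bad B k m \<gamma> \<Longrightarrow> info_leak \<gamma> (prog1 B) N < info_leak \<gamma> (prog2 k m) N"
proof -
  note S = S_formulas[OF assms]
  have BN: "B \<le> N" using assms by linarith
  have Npos: "real N > 0" using assms(1) BN by simp
  have Np: "real N powr \<gamma> > 0" using Npos by simp
  have Bpos: "real B > 0" using assms by simp
  have mpos: "real m > 0" using assms by simp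
  have kpos: "real k > 0" using assms by simp
  define S1 where "S1 = (real B powr \<gamma> + (real N - real B)) / real N powr \<gamma>"
  define S2 where "S2 = (real k * real m powr \<gamma> + (real N - real k * real m)) / real N powr \<gamma>"
  have S1pos: "S1 > 0" unfolding S1_def using Np Bpos BN
    by (intro divide_pos_pos add_pos_nonneg) auto
  have S2pos: "S2 > 0"
  proof -
    have "real k * real m \<le> real N" using assms(5) by (metis of_nat_le_iff of_nat_mult)
    then show ?thesis unfolding S2_def using Np mpos kpos
      by (intro divide_pos_pos add_pos_nonneg) auto
  qed
  have diff: "S1 - S2 = G B k m \<gamma> / real N powr \<gamma>"
    unfolding S1_def S2_def G_def by (simp add: diff_divide_distrib[symmetric] algebra_simps)
  have IL1: "info_leak \<gamma> (prog1 B) N = (if \<gamma> = 1 then ln (real N) - real B * ln (real B) / real N else 1/(1-\<gamma>) * ln S1)"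
    unfolding info_leak_eq S1_def using S by simp
  have IL2: "info_leak \<gamma> (prog2 k m) N = (if \<gamma> = 1 then ln (real N) - real k * real m * ln (real m) / real N else 1/(1-\<gamma>) * ln S2)"
    unfolding info_leak_eq S2_def using S by simp
  have sgn_G: "(S1 > S2 \<longleftrightarrow> G B k m \<gamma> > 0) \<and> (S1 < S2 \<longleftrightarrow> G B k m \<gamma> < 0)"
  proof -
    have "S1 - S2 > 0 \<longleftrightarrow> G B k m \<gamma> > 0" unfolding diff using Np by (simp add: zero_less_divide_iff) 
    moreover have "S1 - S2 < 0 \<longleftrightarrow> G B k m \<gamma> < 0" unfolding diff using Np by (simp add: divide_less_0_iff) 
    ultimately show ?thesis by linarith
  qed
  have lnmono: "ln S1 > ln S2 \<longleftrightarrow> S1 > S2" "ln S1 < ln S2 \<longleftrightarrow> S1 < S2"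
    using S1pos S2pos by auto
  show "good B k m \<gamma> \<Longrightarrow> info_leak \<gamma> (prog1 B) N > info_leak \<gamma> (prog2 k m) N"
  proof -
    assume g: "good B k m \<gamma>"
    consider (e) "\<gamma> = 1" | (l) "\<gamma> < 1" | (r) "\<gamma> > 1" by linarith
    then show ?thesis
    proof cases
      case e
      then have "real B * ln (real B) < real k * real m * ln (real m)" using g unfolding good_def by simp
      then have "real B * ln (real B) / real N < real k * real m * ln (real m) / real N"
        using Npos by (simp add: divide_strict_right_mono)
      then show ?thesis unfolding IL1 IL2 using e by simp
    next
      case l
      then have "ln S1 > ln S2" using g sgn_G lnmono unfolding good_def by auto
      moreover have "1/(1-\<gamma>) > 0" using l by simp
      ultimately show ?thesis unfolding IL1 IL2 using l by (simp add: divide_strict_right_mono)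
    next
      case r
      then have "ln S1 < ln S2" using g sgn_G lnmono unfolding good_def by auto
      moreover have "1/(1-\<gamma>) < 0" using r by simp
      ultimately show ?thesis unfolding IL1 IL2 using r by (simp add: divide_strict_right_mono_neg)
    qed
  qed
  show "bad B k m \<gamma> \<Longrightarrow> info_leak \<gamma> (prog1 B) N < info_leak \<gamma> (prog2 k m) N"
  proof -
    assume g: "bad B k m \<gamma>"
    consider (e) "\<gamma> = 1" | (l) "\<gamma> < 1" | (r) "\<gamma> > 1" by linarith
    then show ?thesis
    proof cases
      case e
      then have "real B * ln (real B) > real k * real m * ln (real m)" using g unfolding bad_def by simp
      then have "real B * ln (real B) / real N > real k * real m * ln (real m) / real N"
        using Npos by (simp add: divide_strict_right_mono)
      then show ?thesis unfolding IL1 IL2 using e by simp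
    next
      case l
      then have "ln S1 < ln S2" using g sgn_G lnmono unfolding bad_def by auto
      moreover have "1/(1-\<gamma>) > 0" using l by simp
      ultimately show ?thesis unfolding IL1 IL2 using l by (simp add: divide_strict_right_mono)
    next
      case r
      then have "ln S1 > ln S2" using g sgn_G lnmono unfolding bad_def by auto
      moreover have "1/(1-\<gamma>) < 0" using r by simp
      ultimately show ?thesis unfolding IL1 IL2 using r by (simp add: divide_strict_right_mono_neg)
    qed
  qed
qed



lemma ev_K:
  fixes x z K :: real
  assumes "x < z"
  shows "\<forall>\<^sub>F n in sequentially. K * real n powr x < real n powr z"
proof -
  have "((\<lambda>n. real n powr (x - z)) \<longlongrightarrow> 0) sequentially"
    using assms by (intro tendsto_neg_powr filterlim_real_sequentially) auto
  then have "((\<lambda>n. K * real n powr (x - z)) \<longlongrightarrow> 0) sequentially"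
    by (rule tendsto_mult_right_zero)
  then have ev1: "\<forall>\<^sub>F n in sequentially. K * real n powr (x - z) < 1"
    by (rule order_tendstoD) simp
  have ev2: "\<forall>\<^sub>F n in sequentially. n \<ge> 1" by (rule eventually_ge_at_top)
  show ?thesis using ev1 ev2
  proof eventually_elim
    case (elim n)
    have pos: "real n powr z > 0" using elim by simp
    have "K * real n powr x = (K * real n powr (x - z)) * real n powr z"
      using elim by (simp add: powr_diff field_simps)
    also have "\<dots> < 1 * real n powr z" using elim(1) pos by (intro mult_strict_right_mono) auto
    finally show ?case by simp
  qed
qed

lemma ev2:
  fixes x y z :: real
  assumes "x < z" "y < z"
  shows "\<forall>\<^sub>F n in sequentially. real n powr x + real n powr y < real n powr z"
  using ev_K[OF assms(1), of 2] ev_K[OF assms(2), of 2]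
  by eventually_elim simp

lemma rpow: "(n::nat) > 0 \<Longrightarrow> real (n ^ t) = real n powr real t"
  by (simp add: powr_realpow)

lemma GB_eq:
  assumes "n > 0"
  shows "G (n^(r+1)) (n^p) n \<gamma> = real n powr ((real r+1)*\<gamma>) + real n powr (real p+1) - real n powr (real r+1) - real n powr (real p + \<gamma>)"
proof -
  have x: "real n > 0" using assms by simp
  have a: "real (n^(r+1)) = real n powr (real r+1)" using rpow[OF assms, of "r+1"] by (simp add: add.commute)
  have b: "real (n^p) = real n powr real p" using rpow[OF assms, of p] by simp
  have c: "real (n^p) * real n = real n powr (real p+1)" unfolding b using x by (simp add: powr_add)
  have d: "real (n^p) * real n powr \<gamma> = real n powr (real p + \<gamma>)" unfolding b using x by (simp add: powr_add)
  have e: "real (n^(r+1)) powr \<gamma> = real n powr ((real r+1)*\<gamma>)" unfolding a by (rule powr_powr)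
  show ?thesis unfolding G_def e c d a by (simp add: powr_powr)
qed

lemma famB:
  assumes "1 \<le> r" "r < p" "\<gamma> \<ge> 0" "\<gamma> \<noteq> real p / real r"
  shows "\<forall>\<^sub>F n in sequentially. (\<gamma> < real p / real r \<longrightarrow> good (n^(r+1)) (n^p) n \<gamma>) \<and>
                                (\<gamma> > real p / real r \<longrightarrow> bad (n^(r+1)) (n^p) n \<gamma>)"
proof -
  define q where "q = real p / real r"
  have rpos: "real r > 0" using assms by simp
  have q1: "q > 1" unfolding q_def using assms rpos by simp
  have ge2: "\<forall>\<^sub>F n in sequentially. n \<ge> r + 2" by (rule eventually_ge_at_top)
  consider (a) "\<gamma> < 1" | (b) "\<gamma> = 1" | (c) "1 < \<gamma>" "\<gamma> < q" | (d) "\<gamma> > q"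
    using assms(4) unfolding q_def[symmetric] by linarith
  then show ?thesis
  proof cases
    case a
    have "\<forall>\<^sub>F n in sequentially. real n powr (real r+1) + real n powr (real p + \<gamma>) < real n powr (real p+1)"
      using assms a by (intro ev2) auto
    then show ?thesis using ge2
    proof eventually_elim
      case (elim n)
      have np: "n > 0" using elim by simp
      have "G (n^(r+1)) (n^p) n \<gamma> > 0" unfolding GB_eq[OF np] using elim(1)
        using powr_ge_zero[of "real n" "(real r+1)*\<gamma>"] by linarith
      then show ?case using a q1 q_def unfolding good_def by auto
    qed
  next
    case b
    show ?thesis using ge2
    proof eventually_elim
      case (elim n)
      have x: "real n \<ge> real r + 2" using elim by linarith
      then have x1: "real n > 1" "real n > 0" using rpos by auto
      have L: "ln (real n) > 0" using x1 by simp
      have lnp: "ln (real n ^ t) = real t * ln (real n)" for t by (rule ln_realpow)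
      have "real (n^(r+1)) * ln (real (n^(r+1))) = real n ^ (r+1) * (real (r+1) * ln (real n))"
        by (simp only: of_nat_power lnp)
      also have "\<dots> = (real r+1) * real n ^ (r+1) * ln (real n)" by simp
      also have "\<dots> < real n * real n ^ (r+1) * ln (real n)"
        using x L by (intro mult_strict_right_mono) auto
      also have "\<dots> = real n ^ (r+2) * ln (real n)" by simp
      also have "\<dots> \<le> real n ^ (p+1) * ln (real n)"
        using x1 assms L by (intro mult_right_mono power_increasing) auto
      also have "\<dots> = real (n^p) * real n * ln (real n)" by simp
      finally show ?case using b q1 q_def unfolding good_def by auto
    qed
  next
    case c
    have "\<forall>\<^sub>F n in sequentially. real n powr ((real r+1)*\<gamma>) + real n powr (real p+1) < real n powr (real p + \<gamma>)"
    proof (intro ev2)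
      have "real r * \<gamma> < real p" using c rpos unfolding q_def by (simp add: field_simps)
      then show "(real r+1)*\<gamma> < real p + \<gamma>" by (simp add: algebra_simps)
      show "real p + 1 < real p + \<gamma>" using c by simp
    qed
    then show ?thesis using ge2
    proof eventually_elim
      case (elim n)
      have np: "n > 0" using elim by simp
      have cp: "real n powr (real r + 1) > 0" using np by simp
      have "G (n^(r+1)) (n^p) n \<gamma> < 0" unfolding GB_eq[OF np] using elim(1) cp by linarith
      then show ?case using c q1 q_def unfolding good_def by auto
    qed
  next
    case d
    have "\<forall>\<^sub>F n in sequentially. real n powr (real r+1) + real n powr (real p + \<gamma>) < real n powr ((real r+1)*\<gamma>)"
    proof (intro ev2)
      have "real p < real r * \<gamma>" using d rpos unfolding q_def by (simp add: field_simps)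
      then show "real p + \<gamma> < (real r+1)*\<gamma>" by (simp add: algebra_simps)
      have "1 < \<gamma>" using d q1 by simp
      then show "real r + 1 < (real r+1)*\<gamma>" using rpos by simp
    qed
    then show ?thesis using ge2
    proof eventually_elim
      case (elim n)
      have np: "n > 0" using elim by simp
      have "G (n^(r+1)) (n^p) n \<gamma> > 0" unfolding GB_eq[OF np] using elim(1)
        using powr_ge_zero[of "real n" "real p+1"] by linarith
      then show ?case using d q1 q_def unfolding bad_def by auto
    qed
  qed
qed

lemma auxA1:
  fixes x :: real and r p :: nat
  assumes x: "x \<ge> 4 * (real r + 1)" and pr: "p + 1 \<le> r"
  shows "x * x^r * ln (x^r) < (x^(r+1) - x^(p+1)) * ln (x^(r+1) - x^(p+1))"
proof -
  define L where "L = ln x"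
  have x4: "x \<ge> 4" using x by simp
  have x1: "x \<ge> 1" "x > 0" using x4 by auto
  have h1: "x^(p+1) \<le> x^r" using x1 pr by (intro power_increasing) auto
  have xr: "x^r > 0" using x1 by simp
  define Bv where "Bv = x^(r+1) - x^(p+1)"
  have B1: "Bv \<ge> x^r * (x - 1)" unfolding Bv_def using h1 by (simp add: algebra_simps)
  have B2: "x^r * (x - 1) \<ge> x^(r+1) / 2"
  proof -
    have "x^(r+1)/2 = x^r * (x/2)" by simp
    also have "\<dots> \<le> x^r * (x - 1)" using xr x4 by (intro mult_left_mono) auto
    finally show ?thesis .
  qed
  have X2pos: "x^(r+1) / 2 > 0" using x1 by simp
  have lnB: "ln Bv \<ge> ln (x^(r+1) / 2)" using B1 B2 X2pos by (subst ln_le_cancel_iff) auto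
  have lnX: "ln (x^(r+1) / 2) = (real r + 1) * L - ln 2" unfolding L_def using x1
    by (simp add: ln_div ln_mult ln_realpow algebra_simps)
  have ln2: "ln 2 \<le> L / 2"
  proof -
    have "ln (4::real) = 2 * ln 2" using ln_realpow[of 2 2] by simp
    moreover have "ln 4 \<le> L" unfolding L_def using x4 by simp
    ultimately show ?thesis by simp
  qed
  have Lpos: "L > 0" unfolding L_def using x4 by simp
  have lnB2: "ln Bv \<ge> (real r + 1/2) * L" using lnB lnX ln2 by (simp add: algebra_simps)
  have "x * x^r * ln (x^r) = x^r * (x * real r * L)" unfolding L_def using x1 by (simp add: ln_realpow)
  also have "\<dots> < x^r * ((x - 1) * ((real r + 1/2) * L))"
  proof (intro mult_strict_left_mono xr)
    have "x * real r < (x - 1) * (real r + 1/2)" using x by (simp add: algebra_simps)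
    then show "x * real r * L < (x - 1) * ((real r + 1/2) * L)" using Lpos
      by (metis mult.assoc mult_strict_right_mono)
  qed
  also have "\<dots> = (x^r * (x - 1)) * ((real r + 1/2) * L)" by simp
  also have "\<dots> \<le> Bv * ln Bv"
    using B1 B2 order.trans[OF less_imp_le[OF X2pos] order.trans[OF B2 B1]] X2pos lnB2 xr x1 Lpos by (intro mult_mono) auto
  finally show ?thesis unfolding Bv_def .
qed

lemma GA_eq:
  assumes "n > 0" "p \<le> r"
  shows "real (n^(r+1) - n^(p+1)) = real n powr (real r+1) - real n powr (real p+1)"
    and "G (n^(r+1) - n^(p+1)) n (n^r) \<gamma> = real (n^(r+1) - n^(p+1)) powr \<gamma> + real n powr (real p+1) - real n powr (1 + real r*\<gamma>)"
proof -
  have x: "real n > 0" using assms by simp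
  have le: "n^(p+1) \<le> n^(r+1)" using assms by (intro power_increasing) auto
  have a: "real (n^(r+1)) = real n powr (real r+1)" using rpow[OF assms(1), of "r+1"] by (simp add: add.commute)
  have a2: "real (n^(p+1)) = real n powr (real p+1)" using rpow[OF assms(1), of "p+1"] by (simp add: add.commute)
  show e1: "real (n^(r+1) - n^(p+1)) = real n powr (real r+1) - real n powr (real p+1)"
    using le a a2 by (simp add: of_nat_diff)
  have b: "real (n^r) = real n powr real r" using rpow[OF assms(1), of r] by simp
  have c: "real n * real (n^r) = real n powr (real r+1)" unfolding b using x by (simp add: powr_add)
  have d: "real n * real (n^r) powr \<gamma> = real n powr (1 + real r*\<gamma>)" unfolding b using x
    by (simp add: powr_add powr_powr)
  show "G (n^(r+1) - n^(p+1)) n (n^r) \<gamma> = real (n^(r+1) - n^(p+1)) powr \<gamma> + real n powr (real p+1) - real n powr (1 + real r*\<gamma>)"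
    unfolding G_def c d e1 by simp
qed

lemma famA:
  assumes "1 \<le> p" "p < r" "\<gamma> \<ge> 0" "\<gamma> \<noteq> real p / real r"
  shows "\<forall>\<^sub>F n in sequentially. (\<gamma> < real p / real r \<longrightarrow> good (n^(r+1) - n^(p+1)) n (n^r) \<gamma>) \<and>
                                (\<gamma> > real p / real r \<longrightarrow> bad (n^(r+1) - n^(p+1)) n (n^r) \<gamma>)"
proof -
  define q where "q = real p / real r"
  have rpos: "real r > 0" using assms by simp
  have q1: "q < 1" unfolding q_def using assms rpos by simp
  have ge2: "\<forall>\<^sub>F n in sequentially. n \<ge> 4 * (r + 1)" by (rule eventually_ge_at_top)
  have pr: "p \<le> r" using assms by simp
  consider (a) "\<gamma> < q" | (b) "q < \<gamma>" "\<gamma> < 1" | (c) "\<gamma> = 1" | (d) "\<gamma> > 1"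
    using assms(4) unfolding q_def[symmetric] by linarith
  then show ?thesis
  proof cases
    case a
    show ?thesis using ge2
    proof eventually_elim
      case (elim n)
      have np: "n > 0" using elim by simp
      have x1: "real n > 1" using elim by simp
      have "real r * \<gamma> < real p" using a rpos unfolding q_def by (simp add: field_simps)
      then have "real n powr (1 + real r*\<gamma>) < real n powr (real p+1)" using x1
        by (intro powr_less_mono) auto
      then have "G (n^(r+1) - n^(p+1)) n (n^r) \<gamma> > 0" unfolding GA_eq(2)[OF np pr]
        using powr_ge_zero[of "real (n^(r+1) - n^(p+1))" "\<gamma>"] by linarith
      then show ?case using a q1 q_def unfolding good_def by auto
    qed
  next
    case b
    have "\<forall>\<^sub>F n in sequentially. real n powr ((real r+1)*\<gamma>) + real n powr (real p+1) < real n powr (1 + real r*\<gamma>)"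
    proof (intro ev2)
      show "(real r+1)*\<gamma> < 1 + real r*\<gamma>" using b by (simp add: algebra_simps)
      have "real p < real r * \<gamma>" using b rpos unfolding q_def by (simp add: field_simps)
      then show "real p + 1 < 1 + real r*\<gamma>" by simp
    qed
    then show ?thesis using ge2
    proof eventually_elim
      case (elim n)
      have np: "n > 0" using elim by simp
      have Ble: "real (n^(r+1) - n^(p+1)) \<le> real n powr (real r+1)"
        by (simp only: GA_eq(1)[OF np pr]) simp
      have "real (n^(r+1) - n^(p+1)) powr \<gamma> \<le> (real n powr (real r+1)) powr \<gamma>"
        using assms(3) Ble by (intro powr_mono2) auto
      also have "\<dots> = real n powr ((real r+1)*\<gamma>)" by (rule powr_powr)
      finally have "G (n^(r+1) - n^(p+1)) n (n^r) \<gamma> < 0" unfolding GA_eq(2)[OF np pr] using elim(1)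
        by linarith
      then show ?case using b q_def unfolding bad_def by auto
    qed
  next
    case c
    show ?thesis using ge2
    proof eventually_elim
      case (elim n)
      have np: "n > 0" using elim by simp
      have x: "real n \<ge> 4 * (real r + 1)" 
      proof -
        have "real (4*(r+1)) \<le> real n" using elim by (simp only: of_nat_le_iff)
        then show ?thesis by simp
      qed
      have "p + 1 \<le> r" using assms by simp
      from auxA1[OF x this]
      have A: "real n * real n ^ r * ln (real n ^ r) < (real n ^ (r+1) - real n ^ (p+1)) * ln (real n ^ (r+1) - real n ^ (p+1))" .
      have eqB: "real (n^(r+1) - n^(p+1)) = real n ^ (r+1) - real n ^ (p+1)"
      proof -
        have "n^(p+1) \<le> n^(r+1)" using np pr by (intro power_increasing) auto
        then show ?thesis by (simp only: of_nat_diff of_nat_power)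
      qed
      have lhs: "real n * real (n^r) * ln (real (n^r)) = real n * real n ^ r * ln (real n ^ r)"
        by (simp only: of_nat_power)
      have "real n * real (n^r) * ln (real (n^r)) < real (n^(r+1) - n^(p+1)) * ln (real (n^(r+1) - n^(p+1)))"
        unfolding eqB lhs by (rule A)
      then show ?case using c q1 q_def unfolding bad_def by auto
    qed
  next
    case d
    have "\<forall>\<^sub>F n in sequentially. 2 powr \<gamma> * real n powr (1 + real r*\<gamma>) < real n powr ((real r+1)*\<gamma>)"
      using d by (intro ev_K) (simp add: algebra_simps)
    then show ?thesis using ge2
    proof eventually_elim
      case (elim n)
      have np: "n > 0" using elim by simp
      have x2: "real n \<ge> 2" using elim by simp
      have h1: "real n ^ (p+1) \<le> real n ^ r" using x2 assms by (intro power_increasing) auto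
      have "real (n^(r+1) - n^(p+1)) = real n ^ (r+1) - real n ^ (p+1)"
      proof -
        have "n^(p+1) \<le> n^(r+1)" using np pr by (intro power_increasing) auto
        then show ?thesis by (simp only: of_nat_diff of_nat_power)
      qed
      also have "\<dots> \<ge> real n ^ (r+1) / 2"
      proof -
        have "real n ^ (r+1) / 2 = real n ^ r * (real n / 2)" by simp
        also have "\<dots> \<le> real n ^ r * (real n - 1)" using x2 by (intro mult_left_mono) auto
        also have "\<dots> \<le> real n ^ (r+1) - real n ^ (p+1)" using h1 by (simp add: algebra_simps)
        finally show ?thesis .
      qed
      finally have Bge0: "real (n^(r+1) - n^(p+1)) \<ge> real n ^ (r+1) / 2" .
      have pw: "real n powr (real r + 1) = real n ^ (r+1)"
        using rpow[OF np, of "r+1"] by (simp add: add.commute)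
      have Bge: "real (n^(r+1) - n^(p+1)) \<ge> real n powr (real r + 1) / 2"
        unfolding pw by (rule Bge0)
      have "real n powr ((real r+1)*\<gamma>) / 2 powr \<gamma> = (real n powr (real r + 1) / 2) powr \<gamma>"
        by (simp add: powr_divide powr_powr)
      also have "\<dots> \<le> real (n^(r+1) - n^(p+1)) powr \<gamma>"
        using Bge assms(3) by (intro powr_mono2) auto
      finally have le2: "real n powr ((real r+1)*\<gamma>) / 2 powr \<gamma> \<le> real (n^(r+1) - n^(p+1)) powr \<gamma>" .
      have "real n powr (1 + real r*\<gamma>) < real n powr ((real r+1)*\<gamma>) / 2 powr \<gamma>"
        using elim(1) by (simp add: pos_less_divide_eq mult.commute)
      with le2 have "real n powr (1 + real r*\<gamma>) < real (n^(r+1) - n^(p+1)) powr \<gamma>" by linarith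
      then have "G (n^(r+1) - n^(p+1)) n (n^r) \<gamma> > 0" unfolding GA_eq(2)[OF np pr]
        using powr_ge_zero[of "real n" "real p+1"] by linarith
      then show ?case using d q1 q_def unfolding bad_def by auto
    qed
  qed
qed



lemma ev_ex: "eventually P sequentially \<Longrightarrow> \<exists>n. P n"
  unfolding eventually_sequentially by auto

lemma main_lt:
  fixes \<alpha> \<beta> :: real
  assumes "0 \<le> \<alpha>" "\<alpha> < \<beta>"
  shows "\<exists>B k m. 1 \<le> B \<and> B \<le> k*m \<and> 1 \<le> k \<and> 1 \<le> m \<and> good B k m \<alpha> \<and> bad B k m \<beta>"
proof -
  obtain a b where ab: "\<alpha> \<le> a" "a < b" "b \<le> \<beta>" "b \<le> 1 \<or> a \<ge> 1"
  proof (cases "\<beta> \<le> 1 \<or> \<alpha> \<ge> 1")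
    case True then show ?thesis using that[of \<alpha> \<beta>] assms by auto
  next
    case False then show ?thesis using that[of 1 \<beta>] assms by auto
  qed
  obtain q where q: "q \<in> \<rat>" "a < q" "q < b" using Rats_dense_in_real[OF ab(2)] by blast
  have qpos: "q > 0" using q ab assms by linarith
  have q1: "q \<noteq> 1" using q ab by auto
  obtain p r :: nat where pr: "r \<noteq> 0" "\<bar>q\<bar> = real p / real r"
    using Rats_abs_nat_div_natE[OF q(1)] by metis
  have qpr: "q = real p / real r" using pr qpos by simp
  have rpos: "real r > 0" using pr by simp
  have p1: "1 \<le> p"
  proof (rule ccontr)
    assume "\<not> 1 \<le> p" then have "p = 0" by simp
    then show False using qpos qpr by simp
  qed
  have aq: "\<alpha> < q" "q < \<beta>" using q ab by auto
  have ne: "\<alpha> \<noteq> real p / real r" "\<beta> \<noteq> real p / real r" using aq qpr by auto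
  have b0: "0 \<le> \<beta>" using assms by simp
  have ge2: "\<forall>\<^sub>F n in sequentially. (2::nat) \<le> n" by (rule eventually_ge_at_top)
  show ?thesis
  proof (cases "q < 1")
    case True
    then have "real p < real r" using qpr rpos by (simp add: divide_less_eq)
    then have pr2: "p < r" by simp
    from famA[OF p1 pr2 assms(1) ne(1)] famA[OF p1 pr2 b0 ne(2)] ge2
    have "\<forall>\<^sub>F n in sequentially.
        good (n^(r+1) - n^(p+1)) n (n^r) \<alpha> \<and> bad (n^(r+1) - n^(p+1)) n (n^r) \<beta> \<and> 2 \<le> n"
      by eventually_elim (use aq qpr in auto)
    then obtain n where n: "good (n^(r+1) - n^(p+1)) n (n^r) \<alpha>" "bad (n^(r+1) - n^(p+1)) n (n^r) \<beta>" "2 \<le> n"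
      using ev_ex by blast
    have lt: "n^(p+1) < n^(r+1)" using n(3) pr2 by (intro power_strict_increasing) auto
    have "n * n^r = n^(r+1)" by simp
    moreover have "1 \<le> n^(r+1) - n^(p+1)" using lt by linarith
    moreover have "1 \<le> n^r" "1 \<le> n" using n(3) by simp_all
    ultimately have "1 \<le> n^(r+1) - n^(p+1) \<and> n^(r+1) - n^(p+1) \<le> n*n^r \<and> 1 \<le> n \<and> 1 \<le> n^r \<and>
      good (n^(r+1) - n^(p+1)) n (n^r) \<alpha> \<and> bad (n^(r+1) - n^(p+1)) n (n^r) \<beta>" using n by simp
    then show ?thesis by blast
  next
    case False
    then have "q > 1" using q1 by simp
    then have "real r < real p" using qpr rpos by (simp add: less_divide_eq)
    then have pr2: "r < p" by simp
    have r1: "1 \<le> r" using pr by simp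
    from famB[OF r1 pr2 assms(1) ne(1)] famB[OF r1 pr2 b0 ne(2)] ge2
    have "\<forall>\<^sub>F n in sequentially.
        good (n^(r+1)) (n^p) n \<alpha> \<and> bad (n^(r+1)) (n^p) n \<beta> \<and> 2 \<le> n"
      by eventually_elim (use aq qpr in auto)
    then obtain n where n: "good (n^(r+1)) (n^p) n \<alpha>" "bad (n^(r+1)) (n^p) n \<beta>" "2 \<le> n"
      using ev_ex by blast
    have le: "n^(r+1) \<le> n^(p+1)" using n(3) pr2 by (intro power_increasing) auto
    have "n^p * n = n^(p+1)" by simp
    moreover have "1 \<le> n^(r+1)" "1 \<le> n^p" using n(3) by simp_all
    moreover have "1 \<le> n" using n(3) by simp
    ultimately have "1 \<le> n^(r+1) \<and> n^(r+1) \<le> n^p*n \<and> 1 \<le> n^p \<and> 1 \<le> n \<and>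
      good (n^(r+1)) (n^p) n \<alpha> \<and> bad (n^(r+1)) (n^p) n \<beta>" using n le by simp
    then show ?thesis by blast
  qed
qed

theorem lemma1:
  fixes \<alpha> \<beta> :: real
  assumes "\<alpha> \<ge> 0" and "\<beta> \<ge> 0" and "\<alpha> \<noteq> \<beta>"
  shows "\<exists>(C1::siso_program) (C2::siso_program) (D::real). D > 0 \<and>
           (\<forall>N::nat. real N > D \<longrightarrow>
              info_leak \<alpha> C1 N > info_leak \<alpha> C2 N \<and>
              info_leak \<beta> C1 N < info_leak \<beta> C2 N)"
proof (cases "\<alpha> < \<beta>")
  case True
  obtain B k m where h: "1 \<le> B" "B \<le> k*m" "1 \<le> k" "1 \<le> m" "good B k m \<alpha>" "bad B k m \<beta>"
    using main_lt[OF assms(1) True] by blast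
  have D: "real (k*m) > 0" using h by simp
  show ?thesis
  proof (rule exI[of _ "prog1 B"], rule exI[of _ "prog2 k m"], rule exI[of _ "real (k*m)"], intro conjI[OF D] allI impI)
    fix N :: nat assume "real N > real (k*m)"
    then have "real (k*m) < real N" by simp
    then have "k*m < N" by (simp only: of_nat_less_iff)
    then have N: "k*m \<le> N" by simp
    show "info_leak \<alpha> (prog1 B) N > info_leak \<alpha> (prog2 k m) N \<and> info_leak \<beta> (prog1 B) N < info_leak \<beta> (prog2 k m) N"
      using compare(1)[OF h(1-4) N h(5)] compare(2)[OF h(1-4) N h(6)] by simp
  qed
next
  case False
  then have lt: "\<beta> < \<alpha>" using assms(3) by simp
  obtain B k m where h: "1 \<le> B" "B \<le> k*m" "1 \<le> k" "1 \<le> m" "good B k m \<beta>" "bad B k m \<alpha>"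
    using main_lt[OF assms(2) lt] by blast
  have D: "real (k*m) > 0" using h by simp
  show ?thesis
  proof (rule exI[of _ "prog2 k m"], rule exI[of _ "prog1 B"], rule exI[of _ "real (k*m)"], intro conjI[OF D] allI impI)
    fix N :: nat assume "real N > real (k*m)"
    then have "real (k*m) < real N" by simp
    then have "k*m < N" by (simp only: of_nat_less_iff)
    then have N: "k*m \<le> N" by simp
    show "info_leak \<alpha> (prog2 k m) N > info_leak \<alpha> (prog1 B) N \<and> info_leak \<beta> (prog2 k m) N < info_leak \<beta> (prog1 B) N"
      using compare(2)[OF h(1-4) N h(6)] compare(1)[OF h(1-4) N h(5)] by simp
  qed
qed


end
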